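(* Let $\mathcal X=\{x_{n,k}: n\in\mathbb N,\ k=1,\dots,L_n\}\subseteq\mathbb T$ be a Marcinkiewicz–Zygmund family with weights $\tau=\{\tau_{n,k}\}$ and constants $0<A\le B$ (as defined in the context), and let $\kappa=B/A$. For a continuous function $f$ on $\mathbb T$ and $n\in\mathbb N$ let $p_n\in\mathcal T_n$ be the solution of the least squares problem $$p_n=\operatorname{argmin}_{p\in\mathcal T_n}\sum_{k=1}^{L_n}|f(x_{n,k})-p(x_{n,k})|^2\tau_{n,k}.$$ (i) If $f\in H^\sigma(\mathbb T)$ with $\sigma>1/2$, then $$\|f-p_n\|_2\le C_\sigma\sqrt{1+\kappa^2}\,\|f\|_{H^\sigma}\,n^{-\sigma+1/2}\quad\text{for all } n\in\mathbb N,$$ with a constant $C_\sigma$ depending only on $\sigma$ (one may take $C_\sigma=(\sigma-1/2)^{-1/2}$). (ii) If $f$ extends to an analytic function on the strip $\{z\in\mathbb C:|\operatorname{Im} z|<\rho_0\}$ for some $\rho_0>0$, then for every $\rho<\rho_0$ one has $\|f-p_n\|_2=\mathcal O(e^{-\rho n})$ as $n\to\infty$.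
   Context: $\mathbb T=\mathbb R/\mathbb Z$, identified with $(-1/2,1/2]$ and equipped with Lebesgue measure; $\|\cdot\|_2$ is the $L^2(\mathbb T)$-norm. $\mathcal T_n$ is the space of trigonometric polynomials $p(x)=\sum_{k=-n}^n c_ke^{2\pi i kx}$ of degree $n$. For $f\in L^2(\mathbb T)$, $\hat f(k)=\int_0^1 f(x)e^{-2\pi ikx}\,dx$. The Sobolev space $H^\sigma(\mathbb T)$ consists of $f$ with $\|f\|_{H^\sigma}=\big(\sum_{k\in\mathbb Z}|\hat f(k)|^2(1+k^2)^\sigma\big)^{1/2}<\infty$. A doubly-indexed set of points $\mathcal X=\{x_{n,k}: n\in\mathbb N, k=1,\dots,L_n\}\subseteq\mathbb T$ with weights $\tau_{n,k}\in(0,\infty)$ is called a Marcinkiewicz–Zygmund family if there exist constants $A,B>0$, independent of $n$, such that $A\|p\|_2^2\le\sum_{k=1}^{L_n}|p(x_{n,k})|^2\tau_{n,k}\le B\|p\|_2^2$ for all $p\in\mathcal T_n$ and all $n\in\mathbb N$. *)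

theory Defs
  imports "HOL-Analysis.Analysis" "HOL-Library.Landau_Symbols"
begin

text \<open>Functions on the torus T = R/Z are represented as 1-periodic functions on the reals.\<close>

definition cont_on_torus :: "(real \<Rightarrow> complex) \<Rightarrow> bool" where
  "cont_on_torus f \<longleftrightarrow> continuous_on UNIV f \<and> (\<forall>x. f (x + 1) = f x)"

definition L2norm :: "(real \<Rightarrow> complex) \<Rightarrow> real" where
  "L2norm f = sqrt (integral {0..1} (\<lambda>x. (cmod (f x))\<^sup>2))"

definition fourier_coeff :: "(real \<Rightarrow> complex) \<Rightarrow> int \<Rightarrow> complex" where
  "fourier_coeff f k = integral {0..1} (\<lambda>x. f x * exp (- 2 * pi * \<i> * of_int k * of_real x))"

definition trig_polys :: "nat \<Rightarrow> (real \<Rightarrow> complex) set" where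
  "trig_polys n = {p. \<exists>c :: int \<Rightarrow> complex.
      p = (\<lambda>x. \<Sum>k\<in>{- int n..int n}. c k * exp (2 * pi * \<i> * of_int k * of_real x))}"

definition in_Sobolev :: "real \<Rightarrow> (real \<Rightarrow> complex) \<Rightarrow> bool" where
  "in_Sobolev \<sigma> f \<longleftrightarrow>
     (\<lambda>k::int. (cmod (fourier_coeff f k))\<^sup>2 * (1 + (real_of_int k)\<^sup>2) powr \<sigma>) summable_on UNIV"

definition Sobolev_norm :: "real \<Rightarrow> (real \<Rightarrow> complex) \<Rightarrow> real" where
  "Sobolev_norm \<sigma> f =
     sqrt (infsum (\<lambda>k::int. (cmod (fourier_coeff f k))\<^sup>2 * (1 + (real_of_int k)\<^sup>2) powr \<sigma>) UNIV)"

definition MZ_family ::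
  "(nat \<Rightarrow> nat) \<Rightarrow> (nat \<Rightarrow> nat \<Rightarrow> real) \<Rightarrow> (nat \<Rightarrow> nat \<Rightarrow> real) \<Rightarrow> real \<Rightarrow> real \<Rightarrow> bool" where
  "MZ_family L X \<tau> A B \<longleftrightarrow> 0 < A \<and> 0 < B \<and>
     (\<forall>n\<ge>1. \<forall>k\<in>{1..L n}. X n k \<in> {-1/2<..1/2} \<and> 0 < \<tau> n k) \<and>
     (\<forall>n\<ge>1. \<forall>p\<in>trig_polys n.
        A * (L2norm p)\<^sup>2 \<le> (\<Sum>k=1..L n. (cmod (p (X n k)))\<^sup>2 * \<tau> n k) \<and>
        (\<Sum>k=1..L n. (cmod (p (X n k)))\<^sup>2 * \<tau> n k) \<le> B * (L2norm p)\<^sup>2)"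

definition ls_solution ::
  "(nat \<Rightarrow> nat) \<Rightarrow> (nat \<Rightarrow> nat \<Rightarrow> real) \<Rightarrow> (nat \<Rightarrow> nat \<Rightarrow> real) \<Rightarrow> (real \<Rightarrow> complex)
     \<Rightarrow> nat \<Rightarrow> (real \<Rightarrow> complex) \<Rightarrow> bool" where
  "ls_solution L X \<tau> f n p \<longleftrightarrow> p \<in> trig_polys n \<and>
     (\<forall>q\<in>trig_polys n.
        (\<Sum>k=1..L n. (cmod (f (X n k) - p (X n k)))\<^sup>2 * \<tau> n k)
          \<le> (\<Sum>k=1..L n. (cmod (f (X n k) - q (X n k)))\<^sup>2 * \<tau> n k))"

end

theory Submission
  imports Defs "HOL-Complex_Analysis.Complex_Analysis"
begin

definition ee :: "int \<Rightarrow> real \<Rightarrow> complex" where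
  "ee k x = exp (complex_of_real (2 * pi) * \<i> * of_int k * of_real x)"

lemma ee_mult: "ee j x * ee k x = ee (j + k) x"
  unfolding ee_def by (simp add: exp_add[symmetric] algebra_simps)

lemma ee_zero[simp]: "ee 0 x = 1"
  by (simp add: ee_def)

lemma ee_int_shift: "ee k (x + of_int m) = ee k x"
proof -
  have "ee k (x + of_int m) = ee k x * exp (complex_of_real (2 * pi) * \<i> * of_int (k*m))"
    unfolding ee_def by (simp add: exp_add[symmetric] algebra_simps)
  also have "exp (complex_of_real (2 * pi) * \<i> * of_int (k*m)) = 1"
    using exp_integer_2pi[of "of_int (k*m)"] by (simp add: mult.commute mult.left_commute)
  finally show ?thesis by simp
qed

lemma ee_shift1: "ee k (x + 1) = ee k x"
  using ee_int_shift[of k x 1] by simp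

lemma norm_ee[simp]: "cmod (ee k x) = 1"
  unfolding ee_def by (simp add: norm_exp_eq_Re)

lemma cnj_ee: "cnj (ee k x) = ee (-k) x"
  unfolding ee_def by (simp add: exp_cnj)

lemma ee_minus_def: "exp (complex_of_real (- 2 * pi) * \<i> * of_int k * of_real x) = ee (-k) x"
  unfolding ee_def by simp

lemma fourier_coeff_ee: "fourier_coeff f k = integral {0..1} (\<lambda>x. f x * ee (-k) x)"
  unfolding fourier_coeff_def ee_minus_def ..

lemma continuous_ee[continuous_intros]: "continuous_on S (ee k)"
  unfolding ee_def by (intro continuous_intros)

lemma ee_alt: "ee m x = exp ((complex_of_real (2*pi) * \<i> * of_int m) * of_real x)"
  unfolding ee_def by (simp add: mult.assoc)

lemma has_vd_ee0: "(ee m has_vector_derivative (complex_of_real (2*pi) * \<i> * of_int m) * ee m x) (at x within S)"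
proof -
  define c where "c = complex_of_real (2*pi) * \<i> * of_int m"
  have "((\<lambda>z. exp (c * z)) has_field_derivative exp (c * of_real x) * c) (at (of_real x))"
    by (auto intro!: derivative_eq_intros)
  then have "((\<lambda>x. exp (c * of_real x)) has_vector_derivative exp (c * of_real x) * c) (at x within S)"
    by (rule has_vector_derivative_real_field)
  moreover have "ee m = (\<lambda>x. exp (c * of_real x))" using ee_alt c_def by (simp add: fun_eq_iff)
  ultimately show ?thesis by (simp add: c_def mult.commute)
qed

lemma has_vd_ee: "((\<lambda>x. ee m x / (complex_of_real (2*pi) * \<i> * of_int m)) has_vector_derivative ee m x) (at x within S)"
  if "m \<noteq> 0"
  using has_vector_derivative_mult_left[OF has_vd_ee0[of m x S], where a="inverse (complex_of_real (2*pi) * \<i> * of_int m)"] that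
  by (simp add: field_simps)

lemma has_integral_ee: "(ee m has_integral (if m = 0 then 1 else 0)) {0..1}"
proof (cases "m = 0")
  case True
  have "ee m = (\<lambda>x. 1)" using True by (simp add: fun_eq_iff)
  then show ?thesis using has_integral_const_real[of "1::complex" 0 1] True by simp
next
  case False
  have "(ee m has_integral (ee m 1 / (complex_of_real (2*pi) * \<i> * of_int m) - ee m 0 / (complex_of_real (2*pi) * \<i> * of_int m))) {0..1}"
    by (rule fundamental_theorem_of_calculus) (use has_vd_ee[OF False] in auto)
  moreover have "ee m 1 = ee m 0" using ee_shift1[of m 0] by simp
  ultimately show ?thesis using False by simp
qed

lemma integral_ee: "integral {0..1} (ee m) = (if m = 0 then 1 else 0)"
  using has_integral_ee by (rule integral_unique)

lemma integrable_cont01: fixes f :: "real \<Rightarrow> complex" assumes "continuous_on UNIV f" shows "f integrable_on {0..1::real}"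
  by (rule integrable_continuous_interval) (rule continuous_on_subset[OF assms subset_UNIV])

definition tp :: "nat \<Rightarrow> (int \<Rightarrow> complex) \<Rightarrow> real \<Rightarrow> complex" where
  "tp n c = (\<lambda>x. \<Sum>k\<in>{- int n..int n}. c k * ee k x)"

lemma trig_polys_tp: "p \<in> trig_polys n \<longleftrightarrow> (\<exists>c. p = tp n c)"
  unfolding trig_polys_def tp_def ee_def by simp

lemma tp_in: "tp n c \<in> trig_polys n"
  using trig_polys_tp by blast

lemma continuous_tp[continuous_intros]: "continuous_on S (tp n c)"
  unfolding tp_def by (intro continuous_intros)

lemma tp_shift1: "tp n c (x + 1) = tp n c x"
  unfolding tp_def by (simp add: ee_shift1)

lemma tp_lin: "(\<lambda>x. tp n c x + a * tp n d x) = tp n (\<lambda>k. c k + a * d k)"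
  unfolding tp_def by (simp add: fun_eq_iff sum.distrib sum_distrib_left distrib_right mult.assoc)

lemma tp_diff: "(\<lambda>x. tp n c x - tp n d x) = tp n (\<lambda>k. c k - d k)"
  unfolding tp_def by (simp add: fun_eq_iff sum_subtractf left_diff_distrib)

lemma tp_one: "tp n (\<lambda>k. if k = 0 then 1 else 0) = (\<lambda>x. 1)"
proof
  fix x
  have "tp n (\<lambda>k. if k = 0 then 1 else 0) x = (\<Sum>k\<in>{- int n..int n}. if k = 0 then 1 else 0)"
    unfolding tp_def by (rule sum.cong) auto
  then show "tp n (\<lambda>k. if k = 0 then 1 else 0) x = 1" by simp
qed

lemma integral_u_ee: fixes u :: "real \<Rightarrow> complex"
  assumes "continuous_on UNIV u"
  shows "integral {0..1} (\<lambda>x. u x * cnj (tp n c x)) = (\<Sum>k\<in>{- int n..int n}. cnj (c k) * fourier_coeff u k)"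
proof -
  have "(\<lambda>x. u x * cnj (tp n c x)) = (\<lambda>x. \<Sum>k\<in>{- int n..int n}. cnj (c k) * (u x * ee (-k) x))"
    unfolding tp_def by (simp add: fun_eq_iff cnj_sum sum_distrib_left cnj_ee ac_simps)
  moreover have "(\<lambda>x. u x * ee (-k) x) integrable_on {0..1}" for k
    by (rule integrable_cont01) (intro continuous_intros assms)
  have "integral {0..1} (\<lambda>x. \<Sum>k\<in>{- int n..int n}. cnj (c k) * (u x * ee (-k) x))
      = (\<Sum>k\<in>{- int n..int n}. integral {0..1} (\<lambda>x. cnj (c k) * (u x * ee (-k) x)))"
    by (rule integral_sum) (auto intro!: integrable_cont01 continuous_intros assms)
  ultimately show ?thesis
    by (simp add: fourier_coeff_ee)
qed

lemma fourier_coeff_tp: "fourier_coeff (tp n c) k = (if k \<in> {- int n..int n} then c k else 0)"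
proof -
  have 1: "(\<lambda>x. tp n c x * ee (-k) x) = (\<lambda>x. \<Sum>j\<in>{- int n..int n}. c j * ee (j - k) x)"
    unfolding tp_def by (simp add: fun_eq_iff sum_distrib_right mult.assoc ee_mult)
  have 2: "integral {0..1} (\<lambda>x. \<Sum>j\<in>{- int n..int n}. c j * ee (j - k) x)
     = (\<Sum>j\<in>{- int n..int n}. integral {0..1} (\<lambda>x. c j * ee (j - k) x))"
    by (rule integral_sum) (auto intro!: integrable_cont01 continuous_intros)
  have 3: "integral {0..1} (\<lambda>x. c j * ee (j - k) x) = (if j = k then c j else 0)" for j
    using integral_ee[of "j-k"] by simp
  have "fourier_coeff (tp n c) k = (\<Sum>j\<in>{- int n..int n}. (if j = k then c j else 0))"
    unfolding fourier_coeff_ee 1 2 3 ..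
  also have "\<dots> = (if k \<in> {- int n..int n} then c k else 0)"
    by (simp add: sum.delta')
  finally show ?thesis .
qed

lemma fourier_coeff_diff: fixes f g :: "real \<Rightarrow> complex"
  assumes "continuous_on UNIV f" "continuous_on UNIV g"
  shows "fourier_coeff (\<lambda>x. f x - g x) k = fourier_coeff f k - fourier_coeff g k"
proof -
  have "(\<lambda>x. f x * ee (-k) x) integrable_on {0..1}" "(\<lambda>x. g x * ee (-k) x) integrable_on {0..1}"
    by (rule integrable_cont01, intro continuous_intros assms)+
  then show ?thesis
    unfolding fourier_coeff_ee by (simp add: left_diff_distrib integral_diff)
qed

lemma pythagoras: fixes u d :: "real \<Rightarrow> complex"
  assumes "continuous_on UNIV u" "continuous_on UNIV d"
    and orth: "integral {0..1} (\<lambda>x. u x * cnj (d x)) = 0"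
  shows "integral {0..1} (\<lambda>x. (cmod (u x + d x))\<^sup>2) =
         integral {0..1} (\<lambda>x. (cmod (u x))\<^sup>2) + integral {0..1} (\<lambda>x. (cmod (d x))\<^sup>2)"
proof -
  have eq: "(cmod (u x + d x))\<^sup>2 = (cmod (u x))\<^sup>2 + (cmod (d x))\<^sup>2 + 2 * Re (u x * cnj (d x))" for x
    by (simp only: cmod_power2) (simp add: algebra_simps power2_eq_square)
  have i1: "(\<lambda>x. (cmod (u x))\<^sup>2) integrable_on {0..1}" "(\<lambda>x. (cmod (d x))\<^sup>2) integrable_on {0..1}"
    by (rule integrable_continuous_interval; intro continuous_intros continuous_on_subset[OF assms(1) subset_UNIV] continuous_on_subset[OF assms(2) subset_UNIV])+
  have "(\<lambda>x. u x * cnj (d x)) integrable_on {0..1}"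
    by (rule integrable_cont01) (intro continuous_intros assms)
  then have h0: "((\<lambda>x. u x * cnj (d x)) has_integral 0) {0..1}"
    using orth by (metis integrable_integral)
  have h1: "((\<lambda>x. Re (u x * cnj (d x))) has_integral 0) {0..1}"
    using has_integral_Re[OF h0] by simp
  have i3: "((\<lambda>x. 2 * Re (u x * cnj (d x))) has_integral 0) {0..1}"
    using has_integral_mult_right[OF h1, of 2] by simp
  have "((\<lambda>x. (cmod (u x))\<^sup>2 + (cmod (d x))\<^sup>2 + 2 * Re (u x * cnj (d x))) has_integral
     (integral {0..1} (\<lambda>x. (cmod (u x))\<^sup>2) + integral {0..1} (\<lambda>x. (cmod (d x))\<^sup>2) + 0)) {0..1}"
    by (intro has_integral_add i3 integrable_integral i1)
  then show ?thesis unfolding eq by (simp add: integral_unique)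
qed

lemma cmod_sub_scaled: "(cmod (a - of_real t * b))\<^sup>2 = (cmod a)\<^sup>2 - 2 * t * Re (a * cnj b) + t\<^sup>2 * (cmod b)\<^sup>2"
  by (simp only: cmod_power2) (simp add: algebra_simps power2_eq_square)

lemma proj_bound:
  fixes a b :: "nat \<Rightarrow> complex" and w :: "nat \<Rightarrow> real" and I :: "nat set"
  assumes w: "\<And>k. k \<in> I \<Longrightarrow> 0 \<le> w k"
    and opt: "\<And>t::real. (\<Sum>k\<in>I. (cmod (a k - b k))\<^sup>2 * w k) \<le> (\<Sum>k\<in>I. (cmod (a k - of_real t * b k))\<^sup>2 * w k)"
  shows "(\<Sum>k\<in>I. (cmod (b k))\<^sup>2 * w k) \<le> (\<Sum>k\<in>I. (cmod (a k))\<^sup>2 * w k)"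
proof -
  define N where "N = (\<Sum>k\<in>I. (cmod (b k))\<^sup>2 * w k)"
  define P where "P = (\<Sum>k\<in>I. (cmod (a k))\<^sup>2 * w k)"
  define R where "R = (\<Sum>k\<in>I. Re (a k * cnj (b k)) * w k)"
  have Q: "(\<Sum>k\<in>I. (cmod (a k - of_real t * b k))\<^sup>2 * w k) = P - 2 * t * R + t\<^sup>2 * N" for t
  proof -
    have "(\<Sum>k\<in>I. (cmod (a k - of_real t * b k))\<^sup>2 * w k) =
        (\<Sum>k\<in>I. (cmod (a k))\<^sup>2 * w k - 2 * t * (Re (a k * cnj (b k)) * w k) + t\<^sup>2 * ((cmod (b k))\<^sup>2 * w k))"
      unfolding cmod_sub_scaled by (intro sum.cong refl) (simp add: algebra_simps)
    also have "\<dots> = P - 2 * t * R + t\<^sup>2 * N"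
      unfolding N_def P_def R_def by (simp add: sum.distrib sum_subtractf sum_distrib_left)
    finally show ?thesis .
  qed
  have Q1: "(\<Sum>k\<in>I. (cmod (a k - b k))\<^sup>2 * w k) = P - 2 * R + N"
    using Q[of 1] by simp
  have Q1pos: "0 \<le> P - 2 * R + N"
    unfolding Q1[symmetric] by (intro sum_nonneg mult_nonneg_nonneg w) auto
  have Npos: "0 \<le> N" unfolding N_def by (intro sum_nonneg mult_nonneg_nonneg w) auto
  have Ppos: "0 \<le> P" unfolding P_def by (intro sum_nonneg mult_nonneg_nonneg w) auto
  show ?thesis
  proof (rule ccontr)
    assume "\<not> ?thesis"
    then have NP: "P < N" unfolding N_def P_def by simp
    define \<epsilon> where "\<epsilon> = (N - P) / (2 * N)"
    have epos: "0 < \<epsilon>" using NP Ppos unfolding \<epsilon>_def by simp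
    have "P - 2 * R + N \<le> P - 2 * (1 - \<epsilon>) * R + (1 - \<epsilon>)\<^sup>2 * N"
      using opt[of "1 - \<epsilon>"] unfolding Q Q1 .
    then have "0 \<le> \<epsilon> * (2 * R - 2 * N + \<epsilon> * N)"
      by (simp add: algebra_simps power2_eq_square)
    then have "0 \<le> 2 * R - 2 * N + \<epsilon> * N"
      using epos by (simp add: zero_le_mult_iff)
    then have "(1 - \<epsilon>) * N \<le> P" using Q1pos by (simp add: algebra_simps)
    moreover have "(1 - \<epsilon>) * N = (N + P) / 2" using NP Ppos unfolding \<epsilon>_def
      by (simp add: field_simps)
    ultimately show False using NP by simp
  qed
qed

lemma integrable_sq: fixes u :: "real \<Rightarrow> complex"
  assumes "continuous_on UNIV u"
  shows "(\<lambda>x. (cmod (u x))\<^sup>2) integrable_on {0..1}"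
  by (rule integrable_continuous_interval) (intro continuous_intros continuous_on_subset[OF assms subset_UNIV])

lemma integral_sq_nonneg: fixes u :: "real \<Rightarrow> complex"
  assumes "continuous_on UNIV u"
  shows "0 \<le> integral {0..1} (\<lambda>x. (cmod (u x))\<^sup>2)"
  by (rule integral_nonneg[OF integrable_sq[OF assms]]) auto

lemma L2norm_sq: fixes u :: "real \<Rightarrow> complex"
  assumes "continuous_on UNIV u"
  shows "(L2norm u)\<^sup>2 = integral {0..1} (\<lambda>x. (cmod (u x))\<^sup>2)"
  unfolding L2norm_def using integral_sq_nonneg[OF assms] by simp

lemma integral_sq_le: fixes u :: "real \<Rightarrow> complex"
  assumes "continuous_on UNIV u" "\<And>x. cmod (u x) \<le> E"
  shows "integral {0..1} (\<lambda>x. (cmod (u x))\<^sup>2) \<le> E\<^sup>2"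
proof -
  have "integral {0..1} (\<lambda>x. (cmod (u x))\<^sup>2) \<le> integral {0..1} (\<lambda>x::real. E\<^sup>2)"
  proof (rule Henstock_Kurzweil_Integration.integral_le)
    show "(\<lambda>x. (cmod (u x))\<^sup>2) integrable_on {0..1}" by (rule integrable_sq[OF assms(1)])
    show "(\<lambda>x::real. E\<^sup>2) integrable_on {0..1}" by (rule integrable_continuous_interval) (rule continuous_on_const)
    show "(cmod (u x))\<^sup>2 \<le> E\<^sup>2" for x by (rule power_mono[OF assms(2)]) simp
  qed
  then show ?thesis by simp
qed

lemma core:
  fixes L :: "nat \<Rightarrow> nat" and X \<tau> :: "nat \<Rightarrow> nat \<Rightarrow> real" and A B E :: real
    and f p :: "real \<Rightarrow> complex"
  assumes MZ: "MZ_family L X \<tau> A B"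
    and AB: "A \<le> B"
    and f_cont: "cont_on_torus f"
    and n: "n \<ge> 1"
    and ls: "ls_solution L X \<tau> f n p"
    and sup: "\<And>x. cmod (f x - tp n (fourier_coeff f) x) \<le> E"
  shows "L2norm (\<lambda>x. f x - p x) \<le> sqrt (1 + (B / A)\<^sup>2) * E"
proof -
  have Apos: "0 < A" and Bpos: "0 < B" and tpos: "\<And>k. k \<in> {1..L n} \<Longrightarrow> 0 < \<tau> n k"
    and MZn: "\<And>r. r \<in> trig_polys n \<Longrightarrow> A * (L2norm r)\<^sup>2 \<le> (\<Sum>k=1..L n. (cmod (r (X n k)))\<^sup>2 * \<tau> n k) \<and>
        (\<Sum>k=1..L n. (cmod (r (X n k)))\<^sup>2 * \<tau> n k) \<le> B * (L2norm r)\<^sup>2"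
    using MZ n unfolding MZ_family_def by auto
  have fc: "continuous_on UNIV f" using f_cont unfolding cont_on_torus_def by simp
  have E0: "0 \<le> E" using sup[of 0] norm_ge_zero order_trans by blast
  define q where "q = tp n (fourier_coeff f)"
  obtain c where pc: "p = tp n c" using ls unfolding ls_solution_def trig_polys_tp by auto
  define u where "u = (\<lambda>x. f x - q x)"
  define d where "d = (\<lambda>x. q x - p x)"
  have d_tp: "d = tp n (\<lambda>k. fourier_coeff f k - c k)" unfolding d_def q_def pc tp_diff ..
  have uc: "continuous_on UNIV u" unfolding u_def q_def by (intro continuous_intros fc)
  have dc: "continuous_on UNIV d" unfolding d_tp by (intro continuous_intros)
  have uhat: "fourier_coeff u k = 0" if "k \<in> {- int n..int n}" for k
    unfolding u_def q_def using that
    by (simp add: fourier_coeff_diff[OF fc continuous_tp] fourier_coeff_tp)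
  have orth: "integral {0..1} (\<lambda>x. u x * cnj (d x)) = 0"
    unfolding d_tp integral_u_ee[OF uc] by (simp add: uhat)
  have fp: "(\<lambda>x. f x - p x) = (\<lambda>x. u x + d x)" unfolding u_def d_def by auto
  have pyth: "integral {0..1} (\<lambda>x. (cmod (f x - p x))\<^sup>2) =
         integral {0..1} (\<lambda>x. (cmod (u x))\<^sup>2) + integral {0..1} (\<lambda>x. (cmod (d x))\<^sup>2)"
  proof -
    have "(\<lambda>x. (cmod (f x - p x))\<^sup>2) = (\<lambda>x. (cmod (u x + d x))\<^sup>2)" unfolding u_def d_def by simp
    then show ?thesis using pythagoras[OF uc dc orth] by simp
  qed
  have uE: "integral {0..1} (\<lambda>x. (cmod (u x))\<^sup>2) \<le> E\<^sup>2"
    by (rule integral_sq_le[OF uc]) (use sup in \<open>simp add: u_def q_def\<close>)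
  define a where "a = (\<lambda>k. f (X n k) - q (X n k))"
  define b where "b = (\<lambda>k. p (X n k) - q (X n k))"
  have opt: "(\<Sum>k\<in>{1..L n}. (cmod (a k - b k))\<^sup>2 * \<tau> n k) \<le> (\<Sum>k\<in>{1..L n}. (cmod (a k - of_real t * b k))\<^sup>2 * \<tau> n k)" for t
  proof -
    have "(\<lambda>x. q x + of_real t * (p x - q x)) \<in> trig_polys n"
    proof -
      have "(\<lambda>x. q x + of_real t * (p x - q x)) = (\<lambda>x. tp n (fourier_coeff f) x + of_real t * tp n (\<lambda>k. c k - fourier_coeff f k) x)"
        unfolding q_def pc by (simp only: tp_diff[THEN fun_cong])
      also have "\<dots> = tp n (\<lambda>k. fourier_coeff f k + of_real t * (c k - fourier_coeff f k))"
        by (rule tp_lin)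
      finally show ?thesis using tp_in by simp
    qed
    then have "(\<Sum>k=1..L n. (cmod (f (X n k) - p (X n k)))\<^sup>2 * \<tau> n k)
          \<le> (\<Sum>k=1..L n. (cmod (f (X n k) - (q (X n k) + of_real t * (p (X n k) - q (X n k)))))\<^sup>2 * \<tau> n k)"
    proof -
      have "\<forall>q\<in>trig_polys n. (\<Sum>k = 1..L n. (cmod (f (X n k) - p (X n k)))\<^sup>2 * \<tau> n k)
         \<le> (\<Sum>k = 1..L n. (cmod (f (X n k) - q (X n k)))\<^sup>2 * \<tau> n k)"
        using ls unfolding ls_solution_def by blast
      from bspec[OF this \<open>(\<lambda>x. q x + of_real t * (p x - q x)) \<in> trig_polys n\<close>] show ?thesis by simp
    qed
    moreover have "f (X n k) - p (X n k) = a k - b k" for k unfolding a_def b_def by simp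
    moreover have "f (X n k) - (q (X n k) + of_real t * (p (X n k) - q (X n k))) = a k - of_real t * b k" for k
      unfolding a_def b_def by (simp add: algebra_simps)
    ultimately show ?thesis by simp
  qed
  have ba: "(\<Sum>k\<in>{1..L n}. (cmod (b k))\<^sup>2 * \<tau> n k) \<le> (\<Sum>k\<in>{1..L n}. (cmod (a k))\<^sup>2 * \<tau> n k)"
    by (rule proj_bound[OF _ opt]) (use tpos in \<open>auto intro: less_imp_le\<close>)
  have sumtau: "(\<Sum>k\<in>{1..L n}. \<tau> n k) \<le> B"
  proof -
    have "(\<lambda>x. 1) \<in> trig_polys n" using tp_in tp_one by metis
    from MZn[OF this] have "(\<Sum>k=1..L n. (cmod (1::complex))\<^sup>2 * \<tau> n k) \<le> B * (L2norm (\<lambda>x. 1))\<^sup>2" by simp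
    moreover have "(L2norm (\<lambda>x. 1))\<^sup>2 = 1" by (subst L2norm_sq) auto
    ultimately show ?thesis by simp
  qed
  have aE: "(\<Sum>k\<in>{1..L n}. (cmod (a k))\<^sup>2 * \<tau> n k) \<le> E\<^sup>2 * B"
  proof -
    have "(\<Sum>k\<in>{1..L n}. (cmod (a k))\<^sup>2 * \<tau> n k) \<le> (\<Sum>k\<in>{1..L n}. E\<^sup>2 * \<tau> n k)"
      by (intro sum_mono mult_right_mono power_mono)
        (use tpos sup in \<open>auto simp: a_def q_def intro: less_imp_le\<close>)
    also have "\<dots> \<le> E\<^sup>2 * B" unfolding sum_distrib_left[symmetric]
      by (intro mult_left_mono sumtau) auto
    finally show ?thesis .
  qed
  have pq_tp: "(\<lambda>x. p x - q x) \<in> trig_polys n" unfolding pc q_def tp_diff by (rule tp_in)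
  have "A * (L2norm (\<lambda>x. p x - q x))\<^sup>2 \<le> (\<Sum>k\<in>{1..L n}. (cmod (b k))\<^sup>2 * \<tau> n k)"
    using MZn[OF pq_tp] unfolding b_def by simp
  moreover have "(L2norm (\<lambda>x. p x - q x))\<^sup>2 = integral {0..1} (\<lambda>x. (cmod (d x))\<^sup>2)"
    by (subst L2norm_sq) (auto simp: d_def norm_minus_commute intro!: continuous_intros simp: pc q_def)
  ultimately have "A * integral {0..1} (\<lambda>x. (cmod (d x))\<^sup>2) \<le> E\<^sup>2 * B"
    using ba aE by simp
  then have dE: "integral {0..1} (\<lambda>x. (cmod (d x))\<^sup>2) \<le> E\<^sup>2 * (B / A)"
    using Apos by (simp add: field_simps)
  have kappa: "B / A \<le> (B / A)\<^sup>2"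
  proof -
    have "1 \<le> B / A" using AB Apos by simp
    then have "B / A * 1 \<le> B / A * (B / A)" by (intro mult_left_mono) auto
    then show ?thesis by (simp add: power2_eq_square)
  qed
  have tot: "integral {0..1} (\<lambda>x. (cmod (f x - p x))\<^sup>2) \<le> E\<^sup>2 * (1 + (B / A)\<^sup>2)"
  proof -
    have "integral {0..1} (\<lambda>x. (cmod (f x - p x))\<^sup>2) \<le> E\<^sup>2 + E\<^sup>2 * (B / A)"
      unfolding pyth using uE dE by simp
    also have "\<dots> \<le> E\<^sup>2 * (1 + (B / A)\<^sup>2)"
      using mult_left_mono[OF kappa, of "E\<^sup>2"] by (simp add: algebra_simps)
    finally show ?thesis .
  qed
  have "L2norm (\<lambda>x. f x - p x) \<le> sqrt (E\<^sup>2 * (1 + (B / A)\<^sup>2))"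
    unfolding L2norm_def using tot by (rule real_sqrt_le_mono)
  also have "\<dots> = sqrt (1 + (B / A)\<^sup>2) * E" using E0 by (simp add: real_sqrt_mult)
  finally show ?thesis .
qed

lemma periodic_nat:
  assumes "\<And>x. h (x + 1) = h x"
  shows "h (y + of_nat j) = h (y::real)"
proof (induction j)
  case 0 then show ?case by simp
next
  case (Suc j)
  have eq: "y + of_nat (Suc j) = (y + of_nat j) + 1" by simp
  show ?case by (subst eq, subst assms, rule Suc.IH)
qed

lemma periodic_int:
  assumes "\<And>x. h (x + 1) = h x"
  shows "h (y + of_int m) = h (y::real)"
proof (cases "m \<ge> 0")
  case True
  then obtain j where "m = int j" using nonneg_int_cases by blast
  then show ?thesis using periodic_nat[where h=h, OF assms] by simp
next
  case False
  define j where "j = nat (- m)"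
  have j: "m = - int j" using False unfolding j_def by simp
  have "h (y - of_nat j + of_nat j) = h (y - of_nat j)" by (rule periodic_nat[where h=h, OF assms])
  then show ?thesis using j by simp
qed

definition TL :: "(real \<Rightarrow> complex) \<Rightarrow> bool" where
  "TL F \<longleftrightarrow> (\<exists>cs. \<forall>x. F x = sum_list (map (\<lambda>(c,k). c * ee k x) cs))"

lemma TL_const: "TL (\<lambda>x. c)"
  unfolding TL_def by (rule exI[of _ "[(c,0)]"]) simp

lemma TL_ee: "TL (\<lambda>x. c * ee k x)"
  unfolding TL_def by (rule exI[of _ "[(c,k)]"]) simp

lemma TL_add: "TL F \<Longrightarrow> TL G \<Longrightarrow> TL (\<lambda>x. F x + G x)"
  unfolding TL_def
proof (elim exE)
  fix cs ds
  assume "\<forall>x. F x = sum_list (map (\<lambda>(c,k). c * ee k x) cs)" "\<forall>x. G x = sum_list (map (\<lambda>(c,k). c * ee k x) ds)"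
  then show "\<exists>cs. \<forall>x. F x + G x = sum_list (map (\<lambda>(c,k). c * ee k x) cs)"
    by (intro exI[of _ "cs @ ds"]) simp
qed

lemma sl_shift: "sum_list (map (\<lambda>p. c * fst p * ee (j + snd p) x) ds) = c * ee j x * sum_list (map (\<lambda>p. fst p * ee (snd p) x) ds)"
  by (induction ds) (auto simp: ee_mult[symmetric] algebra_simps)

lemma sl_mult: "sum_list (map (\<lambda>(d,k). d * ee k x) (concat (map (\<lambda>(c,j). map (\<lambda>(d,k). (c*d, j+k)) ds) cs)))
   = sum_list (map (\<lambda>(c,k). c * ee k x) cs) * sum_list (map (\<lambda>(d,k). d * ee k x) ds)"
proof (induction cs)
  case Nil then show ?case by simp
next
  case (Cons p cs)
  obtain c j where p: "p = (c,j)" by fastforce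
  show ?case using Cons by (simp add: p o_def case_prod_beta sl_shift distrib_right)
qed

lemma TL_mult: "TL F \<Longrightarrow> TL G \<Longrightarrow> TL (\<lambda>x. F x * G x)"
  unfolding TL_def
proof (elim exE)
  fix cs ds
  assume "\<forall>x. F x = sum_list (map (\<lambda>(c,k). c * ee k x) cs)" "\<forall>x. G x = sum_list (map (\<lambda>(c,k). c * ee k x) ds)"
  then show "\<exists>cs. \<forall>x. F x * G x = sum_list (map (\<lambda>(c,k). c * ee k x) cs)"
    by (intro exI[of _ "concat (map (\<lambda>(c,j). map (\<lambda>(d,k). (c*d, j+k)) ds) cs)"]) (simp add: sl_mult)
qed

lemma Re_ee1: "complex_of_real (Re (ee 1 x)) = (ee 1 x + ee (-1) x) / 2"
proof -
  have "ee 1 x + cnj (ee 1 x) = complex_of_real (2 * Re (ee 1 x))" by (rule complex_add_cnj)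
  then show ?thesis by (simp add: cnj_ee)
qed

lemma Im_ee1: "complex_of_real (Im (ee 1 x)) = (ee 1 x - ee (-1) x) / (2 * \<i>)"
proof -
  have "ee 1 x - cnj (ee 1 x) = complex_of_real (2 * Im (ee 1 x)) * \<i>" by (rule complex_diff_cnj)
  then show ?thesis by (simp add: cnj_ee field_simps)
qed

lemma TL_real_poly:
  fixes P :: "complex \<Rightarrow> real"
  assumes "real_polynomial_function P"
  shows "TL (\<lambda>x. complex_of_real (P (ee 1 x)))"
  using assms
proof (induction P rule: real_polynomial_function.induct)
  case (linear P)
  have PZ: "P z = Re z * P 1 + Im z * P \<i>" for z
  proof -
    have "z = Re z *\<^sub>R 1 + Im z *\<^sub>R \<i>" by (simp add: complex_eq_iff)
    then have "P z = P (Re z *\<^sub>R 1 + Im z *\<^sub>R \<i>)" by simp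
    also have "\<dots> = Re z * P 1 + Im z * P \<i>"
      using bounded_linear.linear[OF linear] by (simp add: linear_add linear_scale)
    finally show ?thesis .
  qed
  have "(\<lambda>x. complex_of_real (P (ee 1 x))) =
     (\<lambda>x. complex_of_real (Re (ee 1 x)) * complex_of_real (P 1) + complex_of_real (Im (ee 1 x)) * complex_of_real (P \<i>))"
  proof (rule ext)
    fix x show "complex_of_real (P (ee 1 x)) = complex_of_real (Re (ee 1 x)) * complex_of_real (P 1) + complex_of_real (Im (ee 1 x)) * complex_of_real (P \<i>)"
      using PZ[of "ee 1 x"] by simp
  qed
  also have "\<dots> = (\<lambda>x. (complex_of_real (P 1) / 2) * ee 1 x + (complex_of_real (P 1) / 2) * ee (-1) x
       + (complex_of_real (P \<i>) / (2 * \<i>)) * ee 1 x + (- complex_of_real (P \<i>) / (2 * \<i>)) * ee (-1) x)"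
    unfolding Re_ee1 Im_ee1 by (simp add: fun_eq_iff field_simps)
  finally show ?case by (simp only: TL_add TL_ee)
next
  case (const c) then show ?case by (rule TL_const)
next
  case (add f g) then show ?case by (simp add: TL_add)
next
  case (mult f g) then show ?case by (simp add: TL_mult)
qed

lemma TL_poly:
  fixes G :: "complex \<Rightarrow> complex"
  assumes "polynomial_function G"
  shows "TL (\<lambda>x. G (ee 1 x))"
proof -
  have "real_polynomial_function (Re \<circ> G)" "real_polynomial_function (Im \<circ> G)"
    using assms unfolding polynomial_function_def by (auto intro: bounded_linear_Re bounded_linear_Im)
  then have "TL (\<lambda>x. complex_of_real ((Re \<circ> G) (ee 1 x)))" "TL (\<lambda>x. complex_of_real ((Im \<circ> G) (ee 1 x)))"
    using TL_real_poly by blast+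
  then have "TL (\<lambda>x. complex_of_real (Re (G (ee 1 x))) + \<i> * complex_of_real (Im (G (ee 1 x))))"
    using TL_add TL_mult[OF TL_const] by simp
  then show ?thesis by (simp add: complex_eq[symmetric])
qed

lemma sl_cont: "continuous_on S (\<lambda>x. sum_list (map (\<lambda>(c,k). c * ee k x) cs))"
  by (induction cs) (auto intro!: continuous_intros)

lemma TL_orth:
  fixes h :: "real \<Rightarrow> complex"
  assumes hc: "continuous_on UNIV h" and h0: "\<And>k. fourier_coeff h k = 0"
  shows "integral {0..1} (\<lambda>x. h x * sum_list (map (\<lambda>(c,k). c * ee k x) cs)) = 0"
proof (induction cs)
  case Nil then show ?case by simp
next
  case (Cons p cs)
  obtain c k where p: "p = (c,k)" by fastforce
  have i1: "(\<lambda>x. c * (h x * ee k x)) integrable_on {0..1}"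
    by (rule integrable_cont01) (intro continuous_intros hc)
  have i2: "(\<lambda>x. h x * sum_list (map (\<lambda>(c,k). c * ee k x) cs)) integrable_on {0..1}"
    by (rule integrable_cont01) (intro continuous_intros hc sl_cont)
  have "(\<lambda>x. h x * sum_list (map (\<lambda>(c,k). c * ee k x) (p # cs))) =
     (\<lambda>x. c * (h x * ee k x) + h x * sum_list (map (\<lambda>(c,k). c * ee k x) cs))"
    by (simp add: p fun_eq_iff algebra_simps)
  moreover have "integral {0..1} (\<lambda>x. h x * ee k x) = 0"
    using h0[of "-k"] unfolding fourier_coeff_ee by simp
  ultimately show ?case using Cons by (simp add: integral_add[OF i1 i2])
qed

lemma Arg2pi_Arg: "Arg2pi z = (if Arg z < 0 then Arg z + 2 * pi else Arg z)"
proof (cases "z = 0")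
  case True then show ?thesis by (simp add: Arg_def)
next
  case False
  have ze: "of_real (norm z) * exp (\<i> * of_real (Arg z)) = z" using Arg_eq[of z] False by simp
  have r: "- pi < Arg z" "Arg z \<le> pi" using Arg_bounded[of z] by auto
  show ?thesis
  proof (cases "Arg z < 0")
    case True
    have e2: "exp (\<i> * (2 * complex_of_real pi)) = 1" using exp_two_pi_i by (simp add: mult.commute)
    have "exp (\<i> * of_real (Arg z + 2 * pi)) = exp (\<i> * of_real (Arg z))"
      by (simp add: distrib_left exp_add e2)
    then have "of_real (norm z) * exp (\<i> * of_real (Arg z + 2 * pi)) = z" using ze by simp
    then have "Arg2pi z = Arg z + 2 * pi"
      by (rule Arg2pi_unique) (use False True r in auto)
    then show ?thesis using True by simp
  next
    case False2: False
    have "Arg2pi z = Arg z"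
      by (rule Arg2pi_unique[OF ze]) (use False False2 r in auto)
    then show ?thesis using False2 by simp
  qed
qed

lemma h_Arg_eq:
  assumes per: "\<And>x. h (x + 1) = h x"
  shows "h (Arg2pi z / (2 * pi)) = h (Arg z / (2 * pi))"
proof (cases "Arg z < 0")
  case True
  have "Arg2pi z / (2 * pi) = Arg z / (2 * pi) + 1" using True by (simp add: Arg2pi_Arg field_simps)
  then show ?thesis using per by simp
qed (simp add: Arg2pi_Arg)

lemma fourier_unique:
  fixes h :: "real \<Rightarrow> complex"
  assumes hc: "continuous_on UNIV h" and per: "\<And>x. h (x + 1) = h x"
    and h0: "\<And>k. fourier_coeff h k = 0"
  shows "h x = 0"
proof -
  define H where "H z = cnj (h (Arg2pi z / (2 * pi)))" for z
  have H2: "H = (\<lambda>z. cnj (h (Arg z / (2 * pi))))"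
    unfolding H_def using h_Arg_eq[of h, OF per] by (simp add: fun_eq_iff)
  have hcat: "isCont h y" for y using hc by (simp add: continuous_on_eq_continuous_at)
  have Hc: "continuous_on (sphere 0 1) H"
  proof (rule continuous_at_imp_continuous_on, rule ballI)
    fix z :: complex assume z: "z \<in> sphere 0 1"
    show "isCont H z"
    proof (cases "z \<in> \<real>\<^sub>\<ge>\<^sub>0")
      case True
      then have "z \<notin> \<real>\<^sub>\<le>\<^sub>0" using z by (auto simp: nonneg_Reals_def nonpos_Reals_def complex_eq_iff cmod_def)
      then have "isCont Arg z" by (rule continuous_at_Arg)
      then show ?thesis unfolding H2
        by (intro continuous_intros isCont_o2[where g=h, OF _ hcat]) auto
    next
      case False
      then have "isCont Arg2pi z" by (rule continuous_at_Arg2pi)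
      then show ?thesis unfolding H_def
        by (intro continuous_intros isCont_o2[where g=h, OF _ hcat]) auto
    qed
  qed
  have Hee: "H (ee 1 x) = cnj (h x)" if "x \<in> {0..1}" for x
  proof (cases "x = 1")
    case True
    have a: "ee 1 1 = ee 1 0" using ee_shift1[of 1 0] by simp
    have b: "ee 1 0 = 1" by (simp add: ee_def)
    have "ee 1 1 = 1" using a b by simp
    moreover have "Arg2pi 1 = 0" using Arg2pi_of_real[of 1] by simp
    ultimately show ?thesis using True per[of 0] by (simp add: H_def)
  next
    case False
    have "ee 1 x = exp (complex_of_real (2 * pi * x) * \<i>)" unfolding ee_def by (simp add: algebra_simps)
    moreover have "Arg2pi (exp (complex_of_real (2 * pi * x) * \<i>)) = 2 * pi * x"
      by (subst Arg2pi_exp) (use that False in auto)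
    ultimately show ?thesis by (simp add: H_def)
  qed
  obtain Mh where Mh: "Mh > 0" "\<And>x. x \<in> {0..1} \<Longrightarrow> cmod (h x) \<le> Mh"
  proof -
    have "compact (h ` {0..1})" by (intro compact_continuous_image continuous_on_subset[OF hc]) auto
    then obtain M where "M > 0" "\<forall>y\<in>h ` {0..1}. norm y \<le> M" using compact_imp_bounded bounded_pos by metis
    then show ?thesis using that by auto
  qed
  define I where "I = integral {0..1} (\<lambda>x. (cmod (h x))\<^sup>2)"
  have I0: "0 \<le> I" unfolding I_def by (rule integral_sq_nonneg[OF hc])
  have hsq: "(\<lambda>x. (cmod (h x))\<^sup>2) integrable_on {0..1}" by (rule integrable_sq[OF hc])
  have Ile: "I \<le> Mh * e" if e: "e > 0" for e
  proof -
    obtain G where G: "polynomial_function G" "\<And>z. z \<in> sphere 0 1 \<Longrightarrow> norm (H z - G z) < e"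
      using Stone_Weierstrass_polynomial_function[OF compact_sphere Hc e] by blast
    have TLG: "TL (\<lambda>x. G (ee 1 x))" by (rule TL_poly[OF G(1)])
    then obtain cs where cs: "\<And>x. G (ee 1 x) = sum_list (map (\<lambda>(c,k). c * ee k x) cs)"
      unfolding TL_def by blast
    have Gc: "continuous_on UNIV (\<lambda>x. G (ee 1 x))" unfolding cs by (rule sl_cont)
    have orth: "integral {0..1} (\<lambda>x. h x * G (ee 1 x)) = 0"
      unfolding cs by (rule TL_orth[OF hc h0])
    have ee_sph: "ee 1 x \<in> sphere 0 1" for x by simp
    have bnd: "cmod (h x * (cnj (h x) - G (ee 1 x))) \<le> Mh * e" if "x \<in> {0..1}" for x
    proof -
      have "cmod (cnj (h x) - G (ee 1 x)) \<le> e" using G(2)[OF ee_sph, of x] Hee[OF that] by simp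
      then show ?thesis unfolding norm_mult
        by (intro mult_mono Mh that) (use Mh(1) in auto)
    qed
    have i1: "(\<lambda>x. h x * (cnj (h x) - G (ee 1 x))) integrable_on {0..1}"
      by (rule integrable_cont01) (intro continuous_intros hc Gc)
    have i2: "(\<lambda>x. h x * G (ee 1 x)) integrable_on {0..1}"
      by (rule integrable_cont01) (intro continuous_intros hc Gc)
    have "(\<lambda>x. complex_of_real ((cmod (h x))\<^sup>2)) = (\<lambda>x. h x * (cnj (h x) - G (ee 1 x)) + h x * G (ee 1 x))"
    proof (rule ext)
      fix x
      have "complex_of_real ((cmod (h x))\<^sup>2) = h x * cnj (h x)" by (rule complex_norm_square)
      then show "complex_of_real ((cmod (h x))\<^sup>2) = h x * (cnj (h x) - G (ee 1 x)) + h x * G (ee 1 x)"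
        by (simp add: algebra_simps)
    qed
    moreover have "integral {0..1} (\<lambda>x. complex_of_real ((cmod (h x))\<^sup>2)) = complex_of_real I"
      unfolding I_def using has_integral_of_real[OF integrable_integral[OF hsq]] by (rule integral_unique)
    ultimately have "complex_of_real I = integral {0..1} (\<lambda>x. h x * (cnj (h x) - G (ee 1 x)))"
      using integral_add[OF i1 i2] orth by simp
    then have "cmod (complex_of_real I) \<le> integral {0..1} (\<lambda>x::real. Mh * e)"
      using integral_norm_bound_integral[OF i1 integrable_continuous_interval[OF continuous_on_const] bnd] by simp
    then show ?thesis using I0 by simp
  qed
  have "I = 0"
  proof (rule ccontr)
    assume "I \<noteq> 0"
    then have "I > 0" using I0 by simp
    then have "I \<le> Mh * (I / (2 * Mh))" using Ile[of "I / (2 * Mh)"] Mh(1) by simp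
    then show False using \<open>I > 0\<close> Mh(1) by (simp add: field_simps)
  qed
  then have hint: "((\<lambda>x. (cmod (h x))\<^sup>2) has_integral 0) (cbox 0 1)"
    using integrable_integral[OF hsq] unfolding I_def by simp
  have zero01: "h y = 0" if "y \<in> {0..1}" for y
  proof -
    have "(cmod (h y))\<^sup>2 = 0"
      by (rule has_integral_0_cbox_imp_0[OF _ _ hint])
        (use that in \<open>auto intro!: continuous_intros continuous_on_subset[OF hc]\<close>)
    then show ?thesis by simp
  qed
  have "h x = h (frac x + of_int \<lfloor>x\<rfloor>)" by (simp add: frac_def)
  also have "\<dots> = h (frac x)" by (rule periodic_int[where h=h, OF per])
  also have "\<dots> = 0" by (rule zero01) (auto simp: frac_lt_1 less_imp_le)
  finally show ?thesis .
qed

lemma tp_diff_sum: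
  assumes "n \<le> m"
  shows "tp m c x - tp n c x = (\<Sum>k\<in>{- int m..int m} - {- int n..int n}. c k * ee k x)"
proof -
  have "{- int n..int n} \<subseteq> {- int m..int m}" using assms by auto
  then show ?thesis unfolding tp_def by (simp add: sum_diff)
qed

lemma sup_bound:
  fixes h :: "real \<Rightarrow> complex"
  assumes hc: "continuous_on UNIV h" and per: "\<And>x. h (x + 1) = h x"
    and M: "\<And>N::nat. (\<Sum>k\<in>{- int N..int N}. cmod (fourier_coeff h k)) \<le> M"
  shows "cmod (h x) \<le> M"
proof -
  define c where "c = fourier_coeff h"
  define S where "S N = tp N c" for N
  define a where "a N = (\<Sum>k\<in>{- int N..int N}. cmod (c k))" for N
  have sub: "{- int n..int n} \<subseteq> {- int m..int m}" if "n \<le> m" for n m using that by auto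
  have amono: "incseq a" unfolding incseq_def a_def
    by (intro allI impI sum_mono2 sub) auto
  have abdd: "bdd_above (range a)" unfolding a_def c_def by (rule bdd_aboveI[where M=M]) (use M in auto)
  have "convergent a" using LIMSEQ_incseq_SUP[OF abdd amono] unfolding convergent_def by blast
  then have aC: "Cauchy a" by (rule convergent_Cauchy)
  have Sdiff: "cmod (S m x - S n x) \<le> a m - a n" if "n \<le> m" for m n x
  proof -
    have "cmod (S m x - S n x) = cmod (\<Sum>k\<in>{- int m..int m} - {- int n..int n}. c k * ee k x)"
      unfolding S_def tp_diff_sum[OF that] ..
    also have "\<dots> \<le> (\<Sum>k\<in>{- int m..int m} - {- int n..int n}. cmod (c k * ee k x))"
      by (rule norm_sum)
    also have "\<dots> = (\<Sum>k\<in>{- int m..int m} - {- int n..int n}. cmod (c k))"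
      by (simp add: norm_mult)
    also have "\<dots> = a m - a n" unfolding a_def by (rule sum_diff) (use sub[OF that] in auto)
    finally show ?thesis .
  qed
  have "uniformly_Cauchy_on UNIV S"
  proof (rule uniformly_Cauchy_onI)
    fix e :: real assume e: "e > 0"
    from CauchyD[OF aC e] obtain K where K: "\<And>m n. m \<ge> K \<Longrightarrow> n \<ge> K \<Longrightarrow> norm (a m - a n) < e" by blast
    show "\<exists>K. \<forall>x\<in>UNIV. \<forall>m\<ge>K. \<forall>n\<ge>K. dist (S m x) (S n x) < e"
    proof (intro exI[of _ K] ballI allI impI)
      fix x m n assume mn: "K \<le> m" "K \<le> n"
      show "dist (S m x) (S n x) < e"
      proof (cases "n \<le> m")
        case True
        then have "dist (S m x) (S n x) \<le> a m - a n" using Sdiff by (simp add: dist_norm)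
        also have "\<dots> < e" using K[OF mn] by simp
        finally show ?thesis .
      next
        case False
        then have "dist (S m x) (S n x) \<le> a n - a m" using Sdiff[of m n] by (simp add: dist_norm norm_minus_commute)
        also have "\<dots> < e" using K[OF mn(2) mn(1)] by simp
        finally show ?thesis .
      qed
    qed
  qed
  then obtain g where ul: "uniform_limit UNIV S g sequentially"
    using Cauchy_uniformly_convergent unfolding uniformly_convergent_on_def by blast
  have gc: "continuous_on UNIV g"
    by (rule uniform_limit_theorem[OF _ ul]) (auto simp: S_def intro!: always_eventually continuous_intros)
  have pt: "(\<lambda>n. S n y) \<longlonglongrightarrow> g y" for y by (rule tendsto_uniform_limitI[OF ul]) simp
  have gper: "g (y + 1) = g y" for y
  proof -
    have "(\<lambda>n. S n (y + 1)) \<longlonglongrightarrow> g (y + 1)" by (rule pt)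
    moreover have "(\<lambda>n. S n (y + 1)) = (\<lambda>n. S n y)" by (simp add: S_def tp_shift1)
    ultimately show ?thesis using pt[of y] LIMSEQ_unique by metis
  qed
  have gM: "cmod (g y) \<le> M" for y
  proof (rule LIMSEQ_le_const2)
    show "(\<lambda>n. cmod (S n y)) \<longlonglongrightarrow> cmod (g y)" by (rule tendsto_norm[OF pt])
    have "cmod (S n y) \<le> M" for n
    proof -
      have "cmod (S n y) \<le> (\<Sum>k\<in>{- int n..int n}. cmod (c k * ee k y))"
        unfolding S_def tp_def by (rule norm_sum)
      also have "\<dots> = a n" unfolding a_def by (simp add: norm_mult)
      also have "\<dots> \<le> M" unfolding a_def c_def by (rule M)
      finally show ?thesis .
    qed
    then show "\<exists>N. \<forall>n\<ge>N. cmod (S n y) \<le> M" by blast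
  qed
  have gcoef: "fourier_coeff g k = c k" for k
  proof -
    have ul2: "uniform_limit {0..1} (\<lambda>n x. S n x * ee (-k) x) (\<lambda>x. g x * ee (-k) x) sequentially"
    proof (rule uniform_limitI)
      fix e :: real assume e: "e > 0"
      have "\<forall>\<^sub>F n in sequentially. \<forall>x\<in>UNIV. dist (S n x) (g x) < e" by (rule uniform_limitD[OF ul e])
      then show "\<forall>\<^sub>F n in sequentially. \<forall>x\<in>{0..1}. dist (S n x * ee (-k) x) (g x * ee (-k) x) < e"
      proof (rule eventually_mono)
        fix n assume "\<forall>x\<in>UNIV. dist (S n x) (g x) < e"
        moreover have "dist (S n x * ee (-k) x) (g x * ee (-k) x) = dist (S n x) (g x)" for x
          by (simp add: dist_norm left_diff_distrib[symmetric] norm_mult)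
        ultimately show "\<forall>x\<in>{0..1}. dist (S n x * ee (-k) x) (g x * ee (-k) x) < e" by simp
      qed
    qed
    obtain I J where IJ: "\<And>n. ((\<lambda>x. S n x * ee (-k) x) has_integral I n) {0..1}"
      "((\<lambda>x. g x * ee (-k) x) has_integral J) {0..1}" "I \<longlonglongrightarrow> J"
      by (rule uniform_limit_integral[OF ul2]) (auto simp: S_def intro!: continuous_intros)
    have "I n = fourier_coeff (S n) k" for n
      unfolding fourier_coeff_ee using integral_unique[OF IJ(1)[of n]] by simp
    then have In: "I n = (if k \<in> {- int n..int n} then c k else 0)" for n
      unfolding S_def fourier_coeff_tp by simp
    have "eventually (\<lambda>n. I n = c k) sequentially"
      unfolding eventually_sequentially
      by (rule exI[of _ "nat \<bar>k\<bar>"]) (auto simp: In)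
    then have "I \<longlonglongrightarrow> c k" by (rule tendsto_eventually)
    then have "J = c k" using IJ(3) LIMSEQ_unique by blast
    then show ?thesis unfolding fourier_coeff_ee using IJ(2) by (simp add: integral_unique)
  qed
  have d0: "h y - g y = 0" for y
  proof (rule fourier_unique[where h="\<lambda>x. h x - g x"])
    show "continuous_on UNIV (\<lambda>x. h x - g x)" by (intro continuous_intros hc gc)
    show "h (x + 1) - g (x + 1) = h x - g x" for x using per gper by simp
    show "fourier_coeff (\<lambda>x. h x - g x) k = 0" for k
      by (simp add: fourier_coeff_diff[OF hc gc] gcoef c_def)
  qed
  show ?thesis using d0[of x] gM[of x] by simp
qed

lemma core2:
  fixes L :: "nat \<Rightarrow> nat" and X \<tau> :: "nat \<Rightarrow> nat \<Rightarrow> real" and A B E :: real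
    and f p :: "real \<Rightarrow> complex"
  assumes MZ: "MZ_family L X \<tau> A B"
    and AB: "A \<le> B"
    and f_cont: "cont_on_torus f"
    and n: "n \<ge> 1"
    and ls: "ls_solution L X \<tau> f n p"
    and tail: "\<And>N::nat. (\<Sum>k\<in>{- int N..int N} - {- int n..int n}. cmod (fourier_coeff f k)) \<le> E"
  shows "L2norm (\<lambda>x. f x - p x) \<le> sqrt (1 + (B / A)\<^sup>2) * E"
proof (rule core[OF MZ AB f_cont n ls])
  fix x
  have fc: "continuous_on UNIV f" and fper: "\<And>x. f (x + 1) = f x"
    using f_cont unfolding cont_on_torus_def by auto
  define h where "h y = f y - tp n (fourier_coeff f) y" for y
  have hc: "continuous_on UNIV h" unfolding h_def by (intro continuous_intros fc)
  have hper: "h (y + 1) = h y" for y unfolding h_def by (simp add: fper tp_shift1)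
  have hk: "fourier_coeff h k = (if k \<in> {- int n..int n} then 0 else fourier_coeff f k)" for k
    unfolding h_def by (simp add: fourier_coeff_diff[OF fc continuous_tp] fourier_coeff_tp)
  have "(\<Sum>k\<in>{- int N..int N}. cmod (fourier_coeff h k)) \<le> E" for N :: nat
  proof -
    have "(\<Sum>k\<in>{- int N..int N}. cmod (fourier_coeff h k)) =
          (\<Sum>k\<in>{- int N..int N}. if k \<in> {- int n..int n} then 0 else cmod (fourier_coeff f k))"
      by (rule sum.cong) (auto simp: hk)
    also have "\<dots> = (\<Sum>k\<in>{- int N..int N} - {- int n..int n}. cmod (fourier_coeff f k))"
      by (rule sum.mono_neutral_cong_right) auto
    also have "\<dots> \<le> E" by (rule tail)
    finally show ?thesis .
  qed
  then show "cmod (f x - tp n (fourier_coeff f) x) \<le> E"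
    using sup_bound[OF hc hper] unfolding h_def by blast
qed

lemma split_sum:
  fixes \<phi> :: "nat \<Rightarrow> real"
  shows "(\<Sum>k\<in>{- int N..int N} - {- int n..int n}. \<phi> (nat \<bar>k\<bar>)) = 2 * (\<Sum>j\<in>{n+1..N}. \<phi> j)"
proof -
  have eq: "{- int N..int N} - {- int n..int n} = int ` {n+1..N} \<union> (\<lambda>j. - int j) ` {n+1..N}"
  proof (rule set_eqI, rule iffI)
    fix k assume k: "k \<in> {- int N..int N} - {- int n..int n}"
    show "k \<in> int ` {n+1..N} \<union> (\<lambda>j. - int j) ` {n+1..N}"
    proof (cases "k \<ge> 0")
      case True
      then have "k = int (nat k)" by simp
      moreover have "nat k \<in> {n+1..N}" using k True by auto
      ultimately show ?thesis by blast
    next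
      case False
      then have "k = - int (nat (- k))" by simp
      moreover have "nat (- k) \<in> {n+1..N}" using k False by auto
      ultimately show ?thesis by blast
    qed
  qed auto
  have disj: "int ` {n+1..N} \<inter> (\<lambda>j. - int j) ` {n+1..N} = {}" by auto
  have "(\<Sum>k\<in>{- int N..int N} - {- int n..int n}. \<phi> (nat \<bar>k\<bar>)) =
      (\<Sum>k\<in>int ` {n+1..N}. \<phi> (nat \<bar>k\<bar>)) + (\<Sum>k\<in>(\<lambda>j. - int j) ` {n+1..N}. \<phi> (nat \<bar>k\<bar>))"
    unfolding eq by (rule sum.union_disjoint) (use disj in auto)
  also have "(\<Sum>k\<in>int ` {n+1..N}. \<phi> (nat \<bar>k\<bar>)) = (\<Sum>j\<in>{n+1..N}. \<phi> j)"
    by (subst sum.reindex) (auto simp: inj_on_def)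
  also have "(\<Sum>k\<in>(\<lambda>j. - int j) ` {n+1..N}. \<phi> (nat \<bar>k\<bar>)) = (\<Sum>j\<in>{n+1..N}. \<phi> j)"
    by (subst sum.reindex) (auto simp: inj_on_def)
  finally show ?thesis by simp
qed

lemma key_ineq:
  fixes y a :: real
  assumes y: "y \<ge> 2" and a: "a > 0"
  shows "y powr (-(a+1)) \<le> ((y-1) powr (-a) - y powr (-a)) / a"
proof -
  have y0: "y > 0" "y - 1 > 0" using y by auto
  have "ln ((y-1)/y) \<le> (y-1)/y - 1" by (rule ln_le_minus_one) (use y0 in simp)
  then have lnle: "ln (y-1) \<le> ln y - 1/y" using y0 by (simp add: ln_div field_simps)
  have "y powr (-a) * (1 + a / y) \<le> y powr (-a) * exp (a / y)"
    by (intro mult_left_mono exp_ge_add_one_self) auto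
  also have "\<dots> = exp (-a * ln y + a / y)" using y0 by (auto simp: powr_def mult_exp_exp algebra_simps)
  also have "\<dots> \<le> exp (-a * ln (y-1))"
  proof -
    have "a * (ln (y-1) + 1/y) \<le> a * ln y" using lnle a by (intro mult_left_mono) auto
    then show ?thesis by (simp add: algebra_simps)
  qed
  also have "\<dots> = (y-1) powr (-a)" using y0 by (simp add: powr_def)
  finally have "y powr (-a) * (1 + a / y) \<le> (y-1) powr (-a)" .
  moreover have "y powr (-(a+1)) = y powr (-a) / y"
  proof -
    have "y powr (-(a+1)) = y powr (-a + (-1))" by (simp add: algebra_simps)
    also have "\<dots> = y powr (-a) * y powr (-1)" by (rule powr_add)
    also have "\<dots> = y powr (-a) / y" using y0 by (simp add: powr_neg_one)
    finally show ?thesis .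
  qed
  moreover have "y powr (-a) * (1 + a / y) = y powr (-a) + a * (y powr (-a) / y)"
    using y0 by (simp add: field_simps)
  ultimately have "a * y powr (-(a+1)) \<le> (y-1) powr (-a) - y powr (-a)" by simp
  then show ?thesis using a by (simp add: pos_le_divide_eq mult.commute)
qed

lemma tele_bound:
  fixes a :: real and n :: nat
  assumes a: "a > 0" and n: "n \<ge> 1"
  shows "(\<Sum>j\<in>{n+1..N}. real j powr (-(a+1))) \<le> real n powr (-a) / a"
proof (cases "N \<ge> n")
  case False
  then have "{n+1..N} = {}" by auto
  then show ?thesis using a by simp
next
  case True
  have "(\<Sum>j\<in>{n+1..N}. real j powr (-(a+1))) \<le> (real n powr (-a) - real N powr (-a)) / a"
    using True
  proof (induction N rule: dec_induct)
    case base then show ?case by simp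
  next
    case (step N)
    have "{n+1..Suc N} = insert (Suc N) {n+1..N}" using step.hyps by auto
    then have "(\<Sum>j\<in>{n+1..Suc N}. real j powr (-(a+1))) = real (Suc N) powr (-(a+1)) + (\<Sum>j\<in>{n+1..N}. real j powr (-(a+1)))"
      by simp
    also have "\<dots> \<le> (real N powr (-a) - real (Suc N) powr (-a)) / a + (real n powr (-a) - real N powr (-a)) / a"
    proof (rule add_mono[OF _ step.IH])
      have "real (Suc N) \<ge> 2" using step.hyps n by simp
      from key_ineq[OF this a] show "real (Suc N) powr (-(a+1)) \<le> (real N powr (-a) - real (Suc N) powr (-a)) / a"
        by simp
    qed
    also have "\<dots> = (real n powr (-a) - real (Suc N) powr (-a)) / a" using a by (simp add: field_simps)
    finally show ?case .
  qed
  also have "\<dots> \<le> real n powr (-a) / a" using a by (simp add: divide_right_mono)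
  finally show ?thesis .
qed

lemma tail_sobolev:
  fixes f :: "real \<Rightarrow> complex" and \<sigma> :: real and n N :: nat
  assumes \<sigma>: "\<sigma> > 1/2" and sob: "in_Sobolev \<sigma> f" and n: "n \<ge> 1"
  shows "(\<Sum>k\<in>{- int N..int N} - {- int n..int n}. cmod (fourier_coeff f k))
     \<le> (\<sigma> - 1/2) powr (-1/2) * Sobolev_norm \<sigma> f * real n powr (- \<sigma> + 1/2)"
proof -
  define F where "F = {- int N..int N} - {- int n..int n}"
  define w where "w k = (1 + (real_of_int k)\<^sup>2) powr \<sigma>" for k :: int
  define a where "a = 2 * \<sigma> - 1"
  have a: "a > 0" using \<sigma> unfolding a_def by simp
  have wpos: "w k > 0" for k
  proof -
    have "1 + (real_of_int k)\<^sup>2 > 0" by (intro add_pos_nonneg) auto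
    then show ?thesis unfolding w_def by simp
  qed
  define Sob where "Sob = Sobolev_norm \<sigma> f"
  define g where "g k = (cmod (fourier_coeff f k))\<^sup>2 * (1 + (real_of_int k)\<^sup>2) powr \<sigma>" for k
  have gsum: "g summable_on UNIV" using sob unfolding in_Sobolev_def g_def by simp
  have g0: "g k \<ge> 0" for k unfolding g_def by simp
  have Sob2: "Sob\<^sup>2 = infsum g UNIV"
    unfolding Sob_def Sobolev_norm_def g_def[symmetric] using infsum_nonneg[of UNIV g] g0 by simp
  have S1: "(\<Sum>k\<in>F. (cmod (fourier_coeff f k) * sqrt (w k))\<^sup>2) \<le> Sob\<^sup>2"
  proof -
    have "(\<Sum>k\<in>F. (cmod (fourier_coeff f k) * sqrt (w k))\<^sup>2) = (\<Sum>k\<in>F. g k)"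
      by (rule sum.cong) (auto simp: g_def w_def power_mult_distrib less_imp_le[OF wpos[unfolded w_def]])
    also have "\<dots> \<le> infsum g UNIV"
      by (rule finite_sum_le_infsum[OF gsum]) (auto simp: F_def g0)
    finally show ?thesis unfolding Sob2 .
  qed
  have wk: "(1 / sqrt (w k))\<^sup>2 \<le> real (nat \<bar>k\<bar>) powr (-(a+1))" if "k \<in> F" for k
  proof -
    have k1: "\<bar>real_of_int k\<bar> \<ge> 1" using that n unfolding F_def by auto
    have "(1 / sqrt (w k))\<^sup>2 = 1 / w k" using wpos[of k] by (simp add: power_divide)
    also have "\<dots> \<le> 1 / (\<bar>real_of_int k\<bar> powr (2 * \<sigma>))"
    proof (rule divide_left_mono)
      have "\<bar>real_of_int k\<bar> powr (2 * \<sigma>) = (\<bar>real_of_int k\<bar> powr 2) powr \<sigma>"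
        by (simp only: powr_powr)
      also have "\<bar>real_of_int k\<bar> powr 2 = (real_of_int k)\<^sup>2"
        using k1 by (subst powr_numeral) auto
      finally have "\<bar>real_of_int k\<bar> powr (2 * \<sigma>) = ((real_of_int k)\<^sup>2) powr \<sigma>" .
      also have "\<dots> \<le> w k" unfolding w_def using \<sigma> by (intro powr_mono2) auto
      finally show "\<bar>real_of_int k\<bar> powr (2 * \<sigma>) \<le> w k" .
      show "0 < w k * \<bar>real_of_int k\<bar> powr (2 * \<sigma>)" using wpos[of k] k1 by simp
    qed simp
    also have "\<dots> = \<bar>real_of_int k\<bar> powr (-(a+1))" unfolding a_def using k1
      by (simp add: powr_minus_divide)
    also have "\<bar>real_of_int k\<bar> = real (nat \<bar>k\<bar>)" by simp
    finally show ?thesis .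
  qed
  have S2: "(\<Sum>k\<in>F. (1 / sqrt (w k))\<^sup>2) \<le> 2 * (real n powr (-a) / a)"
  proof -
    have "(\<Sum>k\<in>F. (1 / sqrt (w k))\<^sup>2) \<le> (\<Sum>k\<in>F. real (nat \<bar>k\<bar>) powr (-(a+1)))"
      by (rule sum_mono) (rule wk)
    also have "\<dots> = 2 * (\<Sum>j\<in>{n+1..N}. real j powr (-(a+1)))"
      unfolding F_def by (rule split_sum[where \<phi>="\<lambda>j. real j powr (-(a+1))"])
    also have "\<dots> \<le> 2 * (real n powr (-a) / a)"
      using tele_bound[OF a n, of N] by simp
    finally show ?thesis .
  qed
  have CS: "(\<Sum>k\<in>F. cmod (fourier_coeff f k))\<^sup>2 \<le>
       (\<Sum>k\<in>F. (cmod (fourier_coeff f k) * sqrt (w k))\<^sup>2) * (\<Sum>k\<in>F. (1 / sqrt (w k))\<^sup>2)"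
  proof -
    have "(\<Sum>k\<in>F. cmod (fourier_coeff f k)) = (\<Sum>k\<in>F. (cmod (fourier_coeff f k) * sqrt (w k)) * (1 / sqrt (w k)))"
    proof (rule sum.cong[OF refl])
      fix k
      have "sqrt (w k) \<noteq> 0" using wpos[of k] by simp
      then show "cmod (fourier_coeff f k) = (cmod (fourier_coeff f k) * sqrt (w k)) * (1 / sqrt (w k))"
        by simp
    qed
    then show ?thesis using Cauchy_Schwarz_ineq_sum by metis
  qed
  define T where "T = (\<sigma> - 1/2) powr (-1/2) * Sob * real n powr (- \<sigma> + 1/2)"
  have Sob0: "Sob \<ge> 0" unfolding Sob_def Sobolev_norm_def by (rule real_sqrt_ge_zero, rule infsum_nonneg) simp
  have T0: "T \<ge> 0" unfolding T_def using Sob0 by simp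
  have T2: "T\<^sup>2 = Sob\<^sup>2 * (2 * (real n powr (-a) / a))"
  proof -
    have e1: "((\<sigma> - 1/2) powr (-1/2))\<^sup>2 = 2 / a"
    proof -
      have "((\<sigma> - 1/2) powr (-1/2))\<^sup>2 = (\<sigma> - 1/2) powr (-1/2 + -1/2)"
        by (simp add: power2_eq_square powr_add[symmetric])
      also have "\<dots> = 1 / (\<sigma> - 1/2)" using \<sigma> by (simp add: powr_neg_one)
      also have "\<dots> = 2 / a" unfolding a_def by (simp add: field_simps)
      finally show ?thesis .
    qed
    have e2: "(real n powr (- \<sigma> + 1/2))\<^sup>2 = real n powr (-a)"
    proof -
      have "(real n powr (- \<sigma> + 1/2))\<^sup>2 = real n powr ((- \<sigma> + 1/2) + (- \<sigma> + 1/2))"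
        by (simp add: power2_eq_square powr_add[symmetric])
      also have "(- \<sigma> + 1/2) + (- \<sigma> + 1/2) = -a" unfolding a_def by simp
      finally show ?thesis .
    qed
    show ?thesis unfolding T_def power_mult_distrib e1 e2 by (simp add: field_simps)
  qed
  have "(\<Sum>k\<in>F. cmod (fourier_coeff f k))\<^sup>2 \<le> T\<^sup>2"
  proof -
    have "(\<Sum>k\<in>F. cmod (fourier_coeff f k))\<^sup>2 \<le> Sob\<^sup>2 * (2 * (real n powr (-a) / a))"
      using CS mult_mono[OF S1 S2] by (simp add: sum_nonneg)
    then show ?thesis unfolding T2 .
  qed
  then have "(\<Sum>k\<in>F. cmod (fourier_coeff f k)) \<le> T"
    using T0 by (rule power2_le_imp_le)
  then show ?thesis unfolding F_def T_def Sob_def .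
qed

lemma strip_convex: "convex {z::complex. \<bar>Im z\<bar> < r}"
proof (rule convexI)
  fix x y :: complex and u v :: real
  assume x: "x \<in> {z. \<bar>Im z\<bar> < r}" and y: "y \<in> {z. \<bar>Im z\<bar> < r}" and uv: "0 \<le> u" "0 \<le> v" "u + v = 1"
  have "\<bar>Im (u *\<^sub>R x + v *\<^sub>R y)\<bar> \<le> u * \<bar>Im x\<bar> + v * \<bar>Im y\<bar>"
    using uv by (simp add: abs_mult abs_triangle_ineq[THEN order_trans])
  also have "\<dots> < r"
  proof (cases "u = 0")
    case True then show ?thesis using uv y by simp
  next
    case False
    then have "u * \<bar>Im x\<bar> < u * r" using uv x by simp
    moreover have "v * \<bar>Im y\<bar> \<le> v * r" using uv y by (intro mult_left_mono) auto
    ultimately have "u * \<bar>Im x\<bar> + v * \<bar>Im y\<bar> < u * r + v * r" by simp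
    also have "\<dots> = r" using uv by (simp add: distrib_right[symmetric])
    finally show ?thesis .
  qed
  finally show "u *\<^sub>R x + v *\<^sub>R y \<in> {z. \<bar>Im z\<bar> < r}" by simp
qed

lemma strip_open: "open {z::complex. \<bar>Im z\<bar> < r}"
  by (rule open_Collect_less) (intro continuous_intros)+

lemma coeff_decay:
  fixes f :: "real \<Rightarrow> complex" and g :: "complex \<Rightarrow> complex"
  assumes r0: "r0 > 0" and hol: "g holomorphic_on {z. \<bar>Im z\<bar> < r0}"
    and gf: "\<And>x. g (complex_of_real x) = f x"
    and f_cont: "cont_on_torus f"
    and r: "0 < r" "r < r0"
  shows "\<exists>M\<ge>0. \<forall>k. cmod (fourier_coeff f k) \<le> M * exp (- 2 * pi * r * \<bar>real_of_int k\<bar>)"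
proof -
  define \<Omega> where "\<Omega> = {z::complex. \<bar>Im z\<bar> < r0}"
  have \<Omega>o: "open \<Omega>" and \<Omega>c: "convex \<Omega>" unfolding \<Omega>_def by (rule strip_open, rule strip_convex)
  have fper: "f (x + 1) = f x" for x using f_cont unfolding cont_on_torus_def by auto
  have shift_in: "z + 1 \<in> \<Omega>" if "z \<in> \<Omega>" for z using that unfolding \<Omega>_def by simp
  have gper: "g (z + 1) = g z" if z: "z \<in> \<Omega>" for z
  proof -
    have "g (z + 1) - g z = 0"
    proof (rule analytic_continuation[where f="\<lambda>z. g (z + 1) - g z" and S=\<Omega> and U=\<real> and \<xi>=0])
      have "(g \<circ> (\<lambda>z. z + 1)) holomorphic_on \<Omega>"
        by (rule holomorphic_on_compose_gen[OF _ hol[folded \<Omega>_def]]) (auto intro!: holomorphic_intros shift_in)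
      then show "(\<lambda>z. g (z + 1) - g z) holomorphic_on \<Omega>"
        using hol[folded \<Omega>_def] by (auto intro!: holomorphic_intros simp: o_def)
      show "open \<Omega>" by (rule \<Omega>o)
      show "connected \<Omega>" by (rule convex_connected[OF \<Omega>c])
      show "\<real> \<subseteq> \<Omega>" using r0 unfolding \<Omega>_def by (auto elim: Reals_cases)
      show "(0::complex) \<in> \<Omega>" using r0 unfolding \<Omega>_def by simp
      show "(0::complex) islimpt \<real>"
        unfolding islimpt_approachable
      proof (intro allI impI)
        fix e :: real assume e: "0 < e"
        show "\<exists>x'::complex\<in>\<real>. x' \<noteq> 0 \<and> dist x' 0 < e"
          by (rule bexI[of _ "complex_of_real (e/2)"]) (use e in auto)
      qed
      show "g (z + 1) - g z = 0" if "z \<in> \<real>" for z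
      proof -
        from that obtain x where "z = complex_of_real x" by (auto elim: Reals_cases)
        then show ?thesis using gf[of x] gf[of "x + 1"] fper[of x] by simp
      qed
      show "z \<in> \<Omega>" by (rule z)
    qed
    then show ?thesis by simp
  qed
  define K where "K = {z::complex. 0 \<le> Re z \<and> Re z \<le> 1 \<and> \<bar>Im z\<bar> \<le> r}"
  have KO: "K \<subseteq> \<Omega>" unfolding K_def \<Omega>_def using r by auto
  have Kc: "compact K"
  unfolding compact_eq_bounded_closed
  proof (rule conjI)
    show "bounded K" unfolding bounded_iff K_def
      by (rule exI[of _ "1 + r"]) (auto intro: order_trans[OF cmod_le])
    have "K = {z. 0 \<le> Re z} \<inter> {z. Re z \<le> 1} \<inter> {z. \<bar>Im z\<bar> \<le> r}" unfolding K_def by auto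
    then show "closed K"
      by (simp only:) (intro closed_Int closed_Collect_le continuous_intros)
  qed
  have gcK: "continuous_on K g"
    by (rule continuous_on_subset[OF holomorphic_on_imp_continuous_on[OF hol[folded \<Omega>_def]] KO])
  obtain Mg where Mg: "Mg > 0" "\<And>z. z \<in> K \<Longrightarrow> cmod (g z) \<le> Mg"
  proof -
    have "compact (g ` K)" by (rule compact_continuous_image[OF gcK Kc])
    then obtain M where "M > 0" "\<forall>y\<in>g ` K. norm y \<le> M" using compact_imp_bounded bounded_pos by metis
    then show ?thesis using that by auto
  qed
  have main: "cmod (fourier_coeff f k) \<le> Mg * exp (- 2 * pi * r * \<bar>real_of_int k\<bar>)" for k
  proof -
    define c where "c = complex_of_real (2 * pi) * \<i> * of_int k"
    define F where "F z = g z * exp (- (c * z))" for z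
    have Fhol: "F holomorphic_on \<Omega>" unfolding F_def using hol[folded \<Omega>_def] by (intro holomorphic_intros)
    obtain \<Phi> where \<Phi>: "\<And>z. z \<in> \<Omega> \<Longrightarrow> (\<Phi> has_field_derivative F z) (at z within \<Omega>)"
      using holomorphic_convex_primitive'[OF \<Omega>c \<Omega>o Fhol] by blast
    have \<Phi>at: "(\<Phi> has_field_derivative F z) (at z)" if "z \<in> \<Omega>" for z
      using \<Phi>[OF that] at_within_open[OF that \<Omega>o] by simp
    have ec: "exp (- c) = 1"
    proof -
      have "exp (- c) = exp (complex_of_real (2 * pi) * \<i> * of_int (-k))" unfolding c_def
        by simp
      also have "\<dots> = 1"
        using exp_integer_2pi[of "of_int (-k)"] by (simp add: mult.commute mult.left_commute)
      finally show ?thesis .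
    qed
    have Fper: "F (z + 1) = F z" if "z \<in> \<Omega>" for z
      unfolding F_def using gper[OF that] ec by (simp add: distrib_left exp_diff exp_minus field_simps)
    obtain C where C: "\<And>z. z \<in> \<Omega> \<Longrightarrow> \<Phi> (z + 1) - \<Phi> z = C"
    proof -
      have "\<exists>C. \<forall>z\<in>\<Omega>. \<Phi> (z + 1) - \<Phi> z = C"
      proof (rule has_field_derivative_zero_constant[OF \<Omega>c])
        fix z assume z: "z \<in> \<Omega>"
        have "((\<lambda>z. \<Phi> (z + 1) - \<Phi> z) has_field_derivative F (z + 1) - F z) (at z)"
          using \<Phi>at[OF shift_in[OF z]] \<Phi>at[OF z]
          by (intro derivative_intros) (simp_all add: DERIV_shift)
        then show "((\<lambda>z. \<Phi> (z + 1) - \<Phi> z) has_field_derivative 0) (at z within \<Omega>)"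
          using Fper[OF z] by (simp add: has_field_derivative_at_within)
      qed
      then show ?thesis using that by blast
    qed
    have hint: "((\<lambda>x. F (complex_of_real x + \<i> * complex_of_real y)) has_integral C) {0..1}"
      if y: "\<bar>y\<bar> < r0" for y
    proof -
      have inO: "complex_of_real x + \<i> * complex_of_real y \<in> \<Omega>" for x unfolding \<Omega>_def using y by simp
      have "((\<lambda>x. F (complex_of_real x + \<i> * complex_of_real y)) has_integral
          \<Phi> (complex_of_real 1 + \<i> * complex_of_real y) - \<Phi> (complex_of_real 0 + \<i> * complex_of_real y)) {0..1}"
      proof (rule fundamental_theorem_of_calculus)
        fix x :: real assume "x \<in> {0..1}"
        have "((\<lambda>w. \<Phi> (w + \<i> * complex_of_real y)) has_field_derivative F (complex_of_real x + \<i> * complex_of_real y)) (at (complex_of_real x))"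
          using \<Phi>at[OF inO[of x]] by (simp add: DERIV_shift)
        then show "((\<lambda>x. \<Phi> (complex_of_real x + \<i> * complex_of_real y)) has_vector_derivative F (complex_of_real x + \<i> * complex_of_real y)) (at x within {0..1})"
          by (rule has_vector_derivative_real_field)
      qed simp
      moreover have "\<Phi> (complex_of_real 1 + \<i> * complex_of_real y) - \<Phi> (complex_of_real 0 + \<i> * complex_of_real y) = C"
        using C[OF inO[of 0]] by (simp add: add.commute)
      ultimately show ?thesis by simp
    qed
    have fc_eq: "fourier_coeff f k = C"
    proof -
      have "(\<lambda>x. f x * ee (-k) x) = (\<lambda>x. F (complex_of_real x + \<i> * complex_of_real 0))"
        unfolding F_def c_def ee_def by (simp add: fun_eq_iff gf[symmetric] algebra_simps)
      then show ?thesis unfolding fourier_coeff_ee using hint[of 0] r0 by (simp add: integral_unique)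
    qed
    define y where "y = - r * sgn (real_of_int k)"
    have y: "\<bar>y\<bar> \<le> r" "\<bar>y\<bar> < r0" using r by (auto simp: y_def abs_mult abs_sgn_eq)
    have bnd: "cmod (F (complex_of_real x + \<i> * complex_of_real y)) \<le> Mg * exp (- 2 * pi * r * \<bar>real_of_int k\<bar>)"
      if x: "x \<in> cbox 0 1" for x
    proof -
      have inK: "complex_of_real x + \<i> * complex_of_real y \<in> K" using x y unfolding K_def by auto
      have "cmod (exp (- (c * (complex_of_real x + \<i> * complex_of_real y)))) = exp (2 * pi * real_of_int k * y)"
        unfolding c_def by (simp add: norm_exp_eq_Re)
      also have "2 * pi * real_of_int k * y = - 2 * pi * r * \<bar>real_of_int k\<bar>"
        unfolding y_def by (cases "k > 0"; cases "k = 0") (auto simp: abs_if)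
      finally have "cmod (exp (- (c * (complex_of_real x + \<i> * complex_of_real y)))) = exp (- 2 * pi * r * \<bar>real_of_int k\<bar>)" .
      then show ?thesis unfolding F_def norm_mult using Mg(2)[OF inK] by (simp add: mult_right_mono)
    qed
    have "cmod C \<le> Mg * exp (- 2 * pi * r * \<bar>real_of_int k\<bar>)"
      using has_integral_bound[OF _ hint[OF y(2), unfolded interval_cbox] bnd] Mg(1) by simp
    then show ?thesis using fc_eq by simp
  qed
  show ?thesis using main Mg(1) by (intro exI[of _ Mg]) auto
qed

lemma geom_bound:
  fixes q :: real
  assumes q: "0 \<le> q" "q < 1"
  shows "(\<Sum>j\<in>{n+1..N}. q ^ j) \<le> q ^ (n+1) / (1 - q)"
proof (cases "N \<ge> n")
  case False
  then have "{n+1..N} = {}" by auto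
  then show ?thesis using q by simp
next
  case True
  have "(\<Sum>j\<in>{n+1..N}. q ^ j) \<le> (q ^ (n+1) - q ^ (N+1)) / (1 - q)"
    using True
  proof (induction N rule: dec_induct)
    case base then show ?case by simp
  next
    case (step N)
    have "{n+1..Suc N} = insert (Suc N) {n+1..N}" using step.hyps by auto
    then have "(\<Sum>j\<in>{n+1..Suc N}. q ^ j) = q ^ Suc N + (\<Sum>j\<in>{n+1..N}. q ^ j)" by simp
    also have "\<dots> \<le> q ^ Suc N + (q ^ (n+1) - q ^ (N+1)) / (1 - q)" using step.IH by simp
    also have "\<dots> = (q ^ (n+1) - q ^ (Suc N + 1)) / (1 - q)" using q by (simp add: field_simps)
    finally show ?case .
  qed
  also have "\<dots> \<le> q ^ (n+1) / (1 - q)" using q by (simp add: divide_right_mono)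
  finally show ?thesis .
qed

theorem theorem2p2:
  fixes L :: "nat \<Rightarrow> nat" and X \<tau> :: "nat \<Rightarrow> nat \<Rightarrow> real" and A B :: real
    and f :: "real \<Rightarrow> complex"
  assumes MZ: "MZ_family L X \<tau> A B"
    and AB: "A \<le> B"
    and f_cont: "cont_on_torus f"
  shows "(\<forall>\<sigma>::real. \<sigma> > 1/2 \<longrightarrow> in_Sobolev \<sigma> f \<longrightarrow>
            (\<forall>n::nat. n \<ge> 1 \<longrightarrow> (\<forall>p. ls_solution L X \<tau> f n p \<longrightarrow>
               L2norm (\<lambda>x. f x - p x)
                 \<le> (\<sigma> - 1/2) powr (-1/2) * sqrt (1 + (B / A)\<^sup>2) * Sobolev_norm \<sigma> f
                    * real n powr (- \<sigma> + 1/2))))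
       \<and> (\<forall>\<rho>0::real. \<forall>g :: complex \<Rightarrow> complex.
            \<rho>0 > 0 \<longrightarrow> g holomorphic_on {z. \<bar>Im z\<bar> < \<rho>0} \<longrightarrow>
            (\<forall>x::real. g (complex_of_real x) = f x) \<longrightarrow>
            (\<forall>\<rho>::real. \<rho> < \<rho>0 \<longrightarrow>
               (\<forall>P :: nat \<Rightarrow> real \<Rightarrow> complex. (\<forall>n\<ge>1. ls_solution L X \<tau> f n (P n)) \<longrightarrow>
                  (\<lambda>n. L2norm (\<lambda>x. f x - P n x)) \<in> O(\<lambda>n. exp (- \<rho> * real n)))))"
proof (intro conjI allI impI)
  fix \<sigma> :: real and n :: nat and p
  assume \<sigma>: "\<sigma> > 1/2" and sob: "in_Sobolev \<sigma> f" and n: "n \<ge> 1" and ls: "ls_solution L X \<tau> f n p"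
  have "L2norm (\<lambda>x. f x - p x) \<le> sqrt (1 + (B / A)\<^sup>2) *
      ((\<sigma> - 1/2) powr (-1/2) * Sobolev_norm \<sigma> f * real n powr (- \<sigma> + 1/2))"
    by (rule core2[OF MZ AB f_cont n ls tail_sobolev[OF \<sigma> sob n]])
  then show "L2norm (\<lambda>x. f x - p x)
                 \<le> (\<sigma> - 1/2) powr (-1/2) * sqrt (1 + (B / A)\<^sup>2) * Sobolev_norm \<sigma> f
                    * real n powr (- \<sigma> + 1/2)" by (simp add: ac_simps)
next
  fix \<rho>0 :: real and g :: "complex \<Rightarrow> complex" and \<rho> :: real and P :: "nat \<Rightarrow> real \<Rightarrow> complex"
  assume r0: "\<rho>0 > 0" and hol: "g holomorphic_on {z. \<bar>Im z\<bar> < \<rho>0}"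
    and gf: "\<forall>x::real. g (complex_of_real x) = f x" and \<rho>: "\<rho> < \<rho>0"
    and lsP: "\<forall>n\<ge>1. ls_solution L X \<tau> f n (P n)"
  define r where "r = max \<rho> (\<rho>0 / 2)"
  have r: "0 < r" "r < \<rho>0" using r0 \<rho> unfolding r_def by auto
  have r\<rho>: "\<rho> \<le> 2 * pi * r"
  proof -
    have "r \<le> 2 * pi * r" using r(1) pi_gt3 by (simp add: mult_le_cancel_right1)
    then show ?thesis unfolding r_def by linarith
  qed
  obtain M where M: "M \<ge> 0" "\<And>k. cmod (fourier_coeff f k) \<le> M * exp (- 2 * pi * r * \<bar>real_of_int k\<bar>)"
    using coeff_decay[OF r0 hol _ f_cont r] gf by blast
  define q where "q = exp (- 2 * pi * r)"
  have q: "0 \<le> q" "q < 1" unfolding q_def using r(1) by auto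
  define C where "C = sqrt (1 + (B / A)\<^sup>2) * (2 * M / (1 - q))"
  have bound: "L2norm (\<lambda>x. f x - P n x) \<le> C * exp (- \<rho> * real n)" if n: "n \<ge> 1" for n
  proof -
    have tail: "(\<Sum>k\<in>{- int N..int N} - {- int n..int n}. cmod (fourier_coeff f k)) \<le> 2 * M * q ^ n / (1 - q)" for N
    proof -
      have "(\<Sum>k\<in>{- int N..int N} - {- int n..int n}. cmod (fourier_coeff f k))
          \<le> (\<Sum>k\<in>{- int N..int N} - {- int n..int n}. (\<lambda>j. M * q ^ j) (nat \<bar>k\<bar>))"
      proof (rule sum_mono)
        fix k :: int
        have "exp (- 2 * pi * r * \<bar>real_of_int k\<bar>) = q ^ (nat \<bar>k\<bar>)"
          unfolding q_def exp_of_nat2_mult[symmetric] by simp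
        then show "cmod (fourier_coeff f k) \<le> (\<lambda>j. M * q ^ j) (nat \<bar>k\<bar>)" using M(2)[of k] by simp
      qed
      also have "\<dots> = 2 * (\<Sum>j\<in>{n+1..N}. M * q ^ j)" by (rule split_sum)
      also have "\<dots> = 2 * M * (\<Sum>j\<in>{n+1..N}. q ^ j)" by (simp add: sum_distrib_left mult.assoc)
      also have "\<dots> \<le> 2 * M * (q ^ (n+1) / (1 - q))"
        using geom_bound[OF q, of n N] M(1) by (intro mult_left_mono) auto
      also have "\<dots> \<le> 2 * M * (q ^ n / (1 - q))"
      proof -
        have "q ^ (n+1) \<le> q ^ n" using q by (intro power_decreasing) auto
        then show ?thesis using q M(1) by (intro mult_left_mono divide_right_mono) auto
      qed
      finally show ?thesis by simp
    qed
    have "L2norm (\<lambda>x. f x - P n x) \<le> sqrt (1 + (B / A)\<^sup>2) * (2 * M * q ^ n / (1 - q))"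
      using lsP n by (intro core2[OF MZ AB f_cont n _ tail]) auto
    also have "\<dots> = C * q ^ n" unfolding C_def by simp
    also have "q ^ n = exp (- 2 * pi * r * real n)" unfolding q_def exp_of_nat2_mult[symmetric] by simp
    also have "C * \<dots> \<le> C * exp (- \<rho> * real n)"
    proof (rule mult_left_mono)
      have "\<rho> * real n \<le> 2 * pi * r * real n" using r\<rho> by (intro mult_right_mono) auto
      then show "exp (- 2 * pi * r * real n) \<le> exp (- \<rho> * real n)" by simp
      show "0 \<le> C" unfolding C_def using M(1) q by simp
    qed
    finally show ?thesis .
  qed
  show "(\<lambda>n. L2norm (\<lambda>x. f x - P n x)) \<in> O(\<lambda>n. exp (- \<rho> * real n))"
  proof (rule bigoI)
    show "\<forall>\<^sub>F n in at_top. norm (L2norm (\<lambda>x. f x - P n x)) \<le> C * norm (exp (- \<rho> * real n))"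
      unfolding eventually_at_top_linorder
    proof (intro exI[of _ 1] allI impI)
      fix n :: nat assume "n \<ge> 1"
      have "integral {0..1} (\<lambda>x. (cmod (f x - P n x))\<^sup>2) \<ge> 0"
      proof (cases "(\<lambda>x. (cmod (f x - P n x))\<^sup>2) integrable_on {0..1}")
        case True then show ?thesis by (rule integral_nonneg) auto
      qed (simp add: not_integrable_integral)
      then have "L2norm (\<lambda>x. f x - P n x) \<ge> 0" unfolding L2norm_def by simp
      then show "norm (L2norm (\<lambda>x. f x - P n x)) \<le> C * norm (exp (- \<rho> * real n))"
        using bound[OF \<open>n \<ge> 1\<close>] by simp
    qed
  qed
qed

end
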